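(* Let $G$ be a finite abelian group and $k$ a positive integer such that: (1) $|G| = k^2$ and $\exp(G)$ divides $k$; (2) $N \le G$ with $|N| = k$; (3) the product of all elements of $N$ is $1$; (4) the product of all elements of the quotient group $G/N$ is the identity coset $N$. Then for any listing $N = [n_1, \ldots, n_k]$ there is a complete set of left coset representatives $T = [t_1,\dots,t_k]$ of $N$ in $G$ such that the table of $G$ based on $N$ and $T$ is a pandiagonal magic Cayley-sudoku table.
   Context: All groups are finite and written multiplicatively with identity $1$; $\exp(G)$ is the exponent of $G$. A Cayley table of $G$ is a square array whose rows are labeled by a listing of all elements of $G$ and columns by a listing of all elements of $G$, the entry in row labeled $r$ and column labeled $c$ being $rc$; its body is the array of entries. A Cayley-sudoku table of $G$ is a Cayley table of $G$ whose body is partitioned into uniformly sized rectangular blocks (each block formed by a set of consecutive rows and consecutive columns) such that each element of $G$ appears exactly once in each block. In a $k\times k$ array, a broken diagonal is the list of entries in positions $(\ell, \ell + j)$, $\ell = 1, \ldots, k$, for fixed $j \in \{1, \ldots, k\}$, and a broken antidiagonal is the list of entries in positions $(\ell, j-\ell)$, $\ell=1,\dots,k$, for fixed $j$, indices mod $k$ with representatives in $\{1,\dots,k\}$. Row products are taken left to right; column, broken diagonal and broken antidiagonal products top to bottom. A Cayley-sudoku table is pandiagonal magic if its blocks are square and every row, column, broken diagonal and broken antidiagonal product of each block equals $1$. Given $N = [n_1, \ldots, n_k]$ and a complete set of left coset representatives $T = [t_1, \ldots, t_k]$ of $N$ in $G$, the table of $G$ based on $N$ and $T$ is the Cayley table of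 $G$ whose rows, top to bottom, are labeled $t_1 n_1, \ldots, t_k n_1, t_1 n_2, \ldots, t_k n_2, \ldots, t_1 n_k, \ldots, t_k n_k$ and whose columns, left to right, are labeled $n_1 t_1, \ldots, n_k t_1, n_1 t_2, \ldots, n_k t_2, \ldots, n_1 t_k, \ldots, n_k t_k$, with body partitioned into the $k^2$ blocks of size $k\times k$ given by rows $\{t_1 n_m,\dots,t_k n_m\}$ and columns $\{n_1 t_i,\dots,n_k t_i\}$, $1\le m,i\le k$. *)

theory Defs
  imports "HOL-Algebra.Algebra" "HOL-Algebra.Left_Coset"
begin

definition grp_exp :: "('a, 'b) monoid_scheme \<Rightarrow> nat" where
  "grp_exp G = Lcm (group.ord G ` carrier G)"

definition listing_of :: "'a list \<Rightarrow> 'a set \<Rightarrow> bool" where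
  "listing_of xs A \<longleftrightarrow> distinct xs \<and> set xs = A"

definition left_coset_reps :: "('a, 'b) monoid_scheme \<Rightarrow> 'a set \<Rightarrow> 'a list \<Rightarrow> bool" where
  "left_coset_reps G H ts \<longleftrightarrow> set ts \<subseteq> carrier G \<and>
     bij_betw (\<lambda>i. ts ! i <#\<^bsub>G\<^esub> H) {0..<length ts} (lcosets\<^bsub>G\<^esub> H)"

text \<open>A Cayley table given by row labels rl and column labels cl (0-based indices
  below K), each a listing of the carrier; entry (r,c) is rl r * cl c.\<close>
definition cayley_table :: "('a, 'b) monoid_scheme \<Rightarrow> (nat \<Rightarrow> 'a) \<Rightarrow> (nat \<Rightarrow> 'a) \<Rightarrow> nat \<Rightarrow> bool" where
  "cayley_table G rl cl K \<longleftrightarrow> K = card (carrier G) \<and>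
     bij_betw rl {0..<K} (carrier G) \<and> bij_betw cl {0..<K} (carrier G)"

definition block_entry :: "('a, 'b) monoid_scheme \<Rightarrow> (nat \<Rightarrow> 'a) \<Rightarrow> (nat \<Rightarrow> 'a) \<Rightarrow> nat \<Rightarrow> nat \<Rightarrow> nat \<Rightarrow> nat \<Rightarrow> nat \<Rightarrow> nat \<Rightarrow> 'a" where
  "block_entry G rl cl p q a b x y = rl (a * p + x) \<otimes>\<^bsub>G\<^esub> cl (b * q + y)"

definition cayley_sudoku :: "('a, 'b) monoid_scheme \<Rightarrow> (nat \<Rightarrow> 'a) \<Rightarrow> (nat \<Rightarrow> 'a) \<Rightarrow> nat \<Rightarrow> nat \<Rightarrow> nat \<Rightarrow> bool" where
  "cayley_sudoku G rl cl K p q \<longleftrightarrow> cayley_table G rl cl K \<and> 0 < p \<and> 0 < q \<and>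
     p dvd K \<and> q dvd K \<and>
     (\<forall>a < K div p. \<forall>b < K div q.
        bij_betw (\<lambda>(x, y). block_entry G rl cl p q a b x y) ({0..<p} \<times> {0..<q}) (carrier G))"

text \<open>Pandiagonal magic: square blocks (p = q) and every row, column, broken diagonal
  and broken antidiagonal product of each block equals 1 (abelian setting, so the
  order of multiplication is immaterial; finprod is used).\<close>
definition pandiagonal_magic :: "('a, 'b) monoid_scheme \<Rightarrow> (nat \<Rightarrow> 'a) \<Rightarrow> (nat \<Rightarrow> 'a) \<Rightarrow> nat \<Rightarrow> nat \<Rightarrow> bool" where
  "pandiagonal_magic G rl cl K p \<longleftrightarrow> cayley_sudoku G rl cl K p p \<and>
     (\<forall>a < K div p. \<forall>b < K div p.
        (\<forall>x < p. finprod G (\<lambda>y. block_entry G rl cl p p a b x y) {0..<p} = \<one>\<^bsub>G\<^esub>) \<and>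
        (\<forall>y < p. finprod G (\<lambda>x. block_entry G rl cl p p a b x y) {0..<p} = \<one>\<^bsub>G\<^esub>) \<and>
        (\<forall>j < p. finprod G (\<lambda>l. block_entry G rl cl p p a b l ((l + j) mod p)) {0..<p} = \<one>\<^bsub>G\<^esub>) \<and>
        (\<forall>j < p. finprod G (\<lambda>l. block_entry G rl cl p p a b l ((j + p - l) mod p)) {0..<p} = \<one>\<^bsub>G\<^esub>))"

definition based_row :: "('a, 'b) monoid_scheme \<Rightarrow> 'a list \<Rightarrow> 'a list \<Rightarrow> nat \<Rightarrow> 'a" where
  "based_row G ns ts r = ts ! (r mod length ts) \<otimes>\<^bsub>G\<^esub> ns ! (r div length ts)"

definition based_col :: "('a, 'b) monoid_scheme \<Rightarrow> 'a list \<Rightarrow> 'a list \<Rightarrow> nat \<Rightarrow> 'a" where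
  "based_col G ns ts c = ns ! (c mod length ns) \<otimes>\<^bsub>G\<^esub> ts ! (c div length ns)"

end

theory Submission
  imports Defs
begin

lemma bij_card_aux:
  assumes "finite B" "inj_on f A" "f ` A \<subseteq> B" "card A = card B"
  shows "bij_betw f A B"
proof -
  have "card (f ` A) = card B" using assms card_image by metis
  hence "f ` A = B" using assms card_subset_eq by metis
  thus ?thesis using assms unfolding bij_betw_def by blast
qed

lemma (in comm_group) prod3:
  fixes k :: nat
  assumes "c \<in> carrier G" "f \<in> {0..<k} \<rightarrow> carrier G" "g \<in> {0..<k} \<rightarrow> carrier G"
  shows "finprod G (\<lambda>l. f l \<otimes> g l \<otimes> c) {0..<k} =
         finprod G f {0..<k} \<otimes> finprod G g {0..<k} \<otimes> c [^] k"
proof -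
  have "finprod G (\<lambda>l. f l \<otimes> g l \<otimes> c) {0..<k} =
        finprod G (\<lambda>l. f l \<otimes> g l) {0..<k} \<otimes> finprod G (\<lambda>l. c) {0..<k}"
    using assms by (intro finprod_multf) auto
  also have "\<dots> = finprod G f {0..<k} \<otimes> finprod G g {0..<k} \<otimes> c [^] k"
    using assms by (simp add: finprod_const)
  finally show ?thesis .
qed

lemma divk_aux: "(c::nat) < k * k \<Longrightarrow> c div k < k"
  by (metis less_mult_imp_div_less)

lemma divk2_aux: "(c::nat) < k ^ 2 \<Longrightarrow> c div k < k"
  by (metis less_mult_imp_div_less power2_eq_square)

lemma mod_perm1:
  assumes "0 < (k::nat)"
  shows "inj_on (\<lambda>l. (l + j) mod k) {0..<k}"
proof (rule inj_onI)
  fix x y assume x: "x \<in> {0..<k}" and y: "y \<in> {0..<k}" and e: "(x + j) mod k = (y + j) mod k"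
  have "int (x + j) mod int k = int (y + j) mod int k" using e by (metis of_nat_mod)
  hence "int k dvd int (x + j) - int (y + j)" by (simp add: mod_eq_dvd_iff)
  hence "int k dvd int y - int x" by (metis dvd_minus_iff minus_diff_eq of_nat_add add_diff_cancel_right)
  moreover have "\<bar>int y - int x\<bar> < int k" using x y by auto
  ultimately have "int y - int x = 0" using dvd_imp_le_int[of "int y - int x" "int k"] by fastforce
  thus "x = y" by simp
qed

lemma mod_perm2:
  assumes "0 < (k::nat)" "j < k"
  shows "inj_on (\<lambda>l. (j + k - l) mod k) {0..<k}"
proof (rule inj_onI)
  fix x y assume x: "x \<in> {0..<k}" and y: "y \<in> {0..<k}" and e: "(j + k - x) mod k = (j + k - y) mod k"
  have "int (j + k - x) mod int k = int (j + k - y) mod int k" using e by (metis of_nat_mod)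
  hence "(int j + int k - int x) mod int k = (int j + int k - int y) mod int k" using x y by (simp add: of_nat_diff)
  hence "int k dvd (int j + int k - int x) - (int j + int k - int y)" by (simp add: mod_eq_dvd_iff)
  hence "int k dvd int y - int x" by simp
  moreover have "\<bar>int y - int x\<bar> < int k" using x y by auto
  ultimately have "int y - int x = 0" using dvd_imp_le_int[of "int y - int x" "int k"] by fastforce
  thus "x = y" by simp
qed

lemma (in comm_group) core:
  fixes N :: "'a set" and k :: nat
  assumes "True"
    and "finite (carrier G)"
    and "0 < k"
    and "card (carrier G) = k ^ 2"
    and "grp_exp G dvd k"
    and "subgroup N G"
    and "card N = k"
    and "finprod G (\<lambda>x. x) N = \<one>\<^bsub>G\<^esub>"
    and "finprod (G Mod N) (\<lambda>C. C) (carrier (G Mod N)) = \<one>\<^bsub>G Mod N\<^esub>"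
  shows "\<forall>ns. listing_of ns N \<longrightarrow>
           (\<exists>ts. length ts = k \<and> left_coset_reps G N ts \<and>
                 pandiagonal_magic G (based_row G ns ts) (based_col G ns ts) (k ^ 2) k)"
proof (intro allI impI)
  fix ns assume ls: "listing_of ns N"
  note fin = assms(2) and kpos = assms(3) and sg = assms(6)
  have nrm: "normal N G" using sg subgroup_imp_normal by blast
  interpret NN: normal N G by (rule nrm)
  interpret Q: comm_group "G Mod N" using abelian_FactGroup[OF sg] .
  have Nsub: "N \<subseteq> carrier G" using sg subgroup.subset by blast
  have dns: "distinct ns" and sns: "set ns = N" using ls unfolding listing_of_def by auto
  have lenns: "length ns = k" using dns sns assms(7) distinct_card by metis
  have nsc: "\<And>i. i < k \<Longrightarrow> ns ! i \<in> carrier G" using Nsub sns lenns nth_mem by blast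
  have pow1: "\<And>x. x \<in> carrier G \<Longrightarrow> x [^] k = \<one>"
  proof -
    fix x assume x: "x \<in> carrier G"
    have "group.ord G x dvd grp_exp G" unfolding grp_exp_def using x by (intro dvd_Lcm) auto
    hence "group.ord G x dvd k" using assms(5) by (rule dvd_trans)
    thus "x [^] k = \<one>" using pow_eq_id[OF x] by simp
  qed
  have cardG: "card (carrier G) = k * k" using assms(4) by (simp add: power2_eq_square)
  have card_rc: "card (rcosets N) = k"
  proof -
    have "card (rcosets N) * k = k * k" using lagrange[OF sg] assms(7) cardG unfolding order_def by simp
    thus ?thesis using kpos by simp
  qed
  have finrc: "finite (rcosets N)" using card_rc kpos card.infinite by fastforce
  obtain f where f: "bij_betw f {0..<k} (rcosets N)"
    using ex_bij_betw_nat_finite[OF finrc] card_rc by metis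
  have "\<forall>i<k. \<exists>a. a \<in> carrier G \<and> f i = N #> a"
  proof (intro allI impI)
    fix i assume "i < k"
    hence "f i \<in> rcosets N" using f unfolding bij_betw_def by auto
    thus "\<exists>a. a \<in> carrier G \<and> f i = N #> a" unfolding RCOSETS_def by auto
  qed
  then obtain r where r: "\<And>i. i < k \<Longrightarrow> r i \<in> carrier G \<and> f i = N #> r i" by metis
  define p where "p = finprod G r {0..<k}"
  have rPi: "r \<in> {0..<k} \<rightarrow> carrier G" using r by auto
  have pc: "p \<in> carrier G" unfolding p_def using rPi by simp
  have hom: "\<And>A. finite A \<Longrightarrow> A \<subseteq> {0..<k} \<Longrightarrow>
      N #> finprod G r A = finprod (G Mod N) (\<lambda>i. N #> r i) A"
  proof -
    fix A :: "nat set" assume "finite A" "A \<subseteq> {0..<k}"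
    thus "N #> finprod G r A = finprod (G Mod N) (\<lambda>i. N #> r i) A"
    proof (induction A rule: finite_induct)
      case empty
      then show ?case using coset_join2[OF _ sg] sg subgroup.one_closed by auto
    next
      case (insert i A)
      have ri: "r i \<in> carrier G" using insert r by auto
      have rA: "r \<in> A \<rightarrow> carrier G" using insert r by auto
      have cosc: "(\<lambda>i. N #> r i) \<in> A \<rightarrow> carrier (G Mod N)"
        using rA unfolding FactGroup_def RCOSETS_def by auto
      have ci: "N #> r i \<in> carrier (G Mod N)" using ri unfolding FactGroup_def RCOSETS_def by auto
      have "N #> finprod G r (insert i A) = N #> (r i \<otimes> finprod G r A)"
        using insert rA ri by simp
      also have "\<dots> = (N #> r i) <#> (N #> finprod G r A)"
        using NN.rcos_sum ri rA by simp
      also have "\<dots> = (N #> r i) \<otimes>\<^bsub>G Mod N\<^esub> finprod (G Mod N) (\<lambda>i. N #> r i) A"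
        using insert by simp
      also have "\<dots> = finprod (G Mod N) (\<lambda>i. N #> r i) (insert i A)"
        using Q.finprod_insert[OF insert(1,2) cosc ci] by simp
      finally show ?case .
    qed
  qed
  have fPi: "f \<in> {0..<k} \<rightarrow> carrier (G Mod N)"
    using f unfolding bij_betw_def FactGroup_def by (simp add: image_subset_iff_funcset[symmetric])
  have "N #> p = finprod (G Mod N) (\<lambda>i. N #> r i) {0..<k}" unfolding p_def using hom by simp
  also have "\<dots> = finprod (G Mod N) f {0..<k}"
  proof (rule Q.finprod_cong')
    show "f \<in> {0..<k} \<rightarrow> carrier (G Mod N)" by (rule fPi)
    fix i assume "i \<in> {0..<k}"
    thus "N #> r i = f i" using r by simp
  qed simp
  also have "\<dots> = finprod (G Mod N) (\<lambda>C. C) (f ` {0..<k})"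
    using f unfolding bij_betw_def
    by (subst Q.finprod_reindex) (auto simp: FactGroup_def)
  also have "\<dots> = N" using f assms(9) unfolding bij_betw_def by (simp add: FactGroup_def)
  finally have pN: "p \<in> N" using coset_join1[OF _ pc sg] by simp
  define t where "t i = r i \<otimes> (if i = 0 then inv p else \<one>)" for i
  have tc: "\<And>i. i < k \<Longrightarrow> t i \<in> carrier G" unfolding t_def using r pc by auto
  have tPi: "t \<in> {0..<k} \<rightarrow> carrier G" using tc by auto
  have tcos: "\<And>i. i < k \<Longrightarrow> N #> t i = f i"
  proof -
    fix i assume i: "i < k"
    show "N #> t i = f i"
    proof (cases "i = 0")
      case True
      have "N #> t i = N #> (inv p \<otimes> r i)" unfolding t_def using True r i pc m_comm by auto
      also have "\<dots> = (N #> inv p) #> r i" using coset_mult_assoc Nsub pc r i by simp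
      also have "\<dots> = N #> r i" using coset_join2[OF _ sg] pN sg subgroup.m_inv_closed pc by auto
      finally show ?thesis using r i by simp
    qed (use r i in \<open>simp add: t_def\<close>)
  qed
  have PT: "finprod G t {0..<k} = \<one>"
  proof -
    have "finprod G t {0..<k} = finprod G r {0..<k} \<otimes> finprod G (\<lambda>i. if i = 0 then inv p else \<one>) {0..<k}"
      unfolding t_def using rPi pc by (intro finprod_multf) auto
    also have "finprod G (\<lambda>i. if i = 0 then inv p else \<one>) {0..<k} = inv p"
      using finprod_singleton_swap[of 0 "{0..<k}" "\<lambda>i. inv p"] kpos pc by auto
    finally show ?thesis unfolding p_def[symmetric] using pc by simp
  qed
  have PN: "finprod G (\<lambda>y. ns ! y) {0..<k} = \<one>"
  proof -
    have im: "(\<lambda>y. ns ! y) ` {0..<k} = N" using sns lenns by (auto simp: in_set_conv_nth)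
    have "finprod G (\<lambda>x. x) ((\<lambda>y. ns ! y) ` {0..<k}) = finprod G (\<lambda>y. ns ! y) {0..<k}"
      using Nsub im lenns dns by (intro finprod_reindex) (auto intro: inj_on_nth)
    thus ?thesis using im assms(8) by simp
  qed
  have PNs: "\<And>s. inj_on s {0..<k} \<Longrightarrow> s ` {0..<k} \<subseteq> {0..<k} \<Longrightarrow>
      finprod G (\<lambda>y. ns ! s y) {0..<k} = \<one>"
  proof -
    fix s assume s1: "inj_on s {0..<k}" and s2: "s ` {0..<k} \<subseteq> {0..<k}"
    have im: "s ` {0..<k} = {0..<k}" using endo_inj_surj[OF _ s2 s1] by simp
    have "finprod G (\<lambda>y. ns ! y) (s ` {0..<k}) = finprod G (\<lambda>y. ns ! s y) {0..<k}"
      using nsc im s1 by (intro finprod_reindex) auto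
    thus "finprod G (\<lambda>y. ns ! s y) {0..<k} = \<one>" using im PN by simp
  qed
  define ts where "ts = map t [0..<k]"
  have lts: "length ts = k" unfolding ts_def by simp
  have tsn: "\<And>i. i < k \<Longrightarrow> ts ! i = t i" unfolding ts_def by simp
  have lcr: "left_coset_reps G N ts"
  proof -
    have "set ts \<subseteq> carrier G" unfolding ts_def using tc by auto
    moreover have "lcosets N = rcosets N"
      unfolding LCOSETS_def RCOSETS_def using NN.coset_eq by auto
    moreover have "bij_betw (\<lambda>i. ts ! i <# N) {0..<k} (rcosets N)"
      using f by (rule bij_betw_cong[THEN iffD2, rotated])
        (simp add: tsn tcos[symmetric] NN.coset_eq tc)
    ultimately show ?thesis unfolding left_coset_reps_def lts by simp
  qed
  define rl where "rl = based_row G ns ts"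
  define cl where "cl = based_col G ns ts"
  have rl_eq: "\<And>r. rl r = t (r mod k) \<otimes> ns ! (r div k)"
    unfolding rl_def based_row_def lts using tsn kpos by simp
  have cl_eq: "\<And>c. c < k * k \<Longrightarrow> cl c = t (c div k) \<otimes> ns ! (c mod k)"
  proof -
    fix c assume c: "c < k * k"
    have "c div k < k" using c by (rule divk_aux)
    thus "cl c = t (c div k) \<otimes> ns ! (c mod k)"
      unfolding cl_def based_col_def lts lenns using tsn tc nsc kpos m_comm by simp
  qed
  have injC: "\<And>c. c \<in> carrier G \<Longrightarrow> inj_on (\<lambda>(x, y). t x \<otimes> ns ! y \<otimes> c) ({0..<k} \<times> {0..<k})"
  proof -
    fix c assume c: "c \<in> carrier G"
    show "inj_on (\<lambda>(x, y). t x \<otimes> ns ! y \<otimes> c) ({0..<k} \<times> {0..<k})"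
    proof (rule inj_onI, clarify)
      fix x y x' y' assume x: "x \<in> {0..<k}" and y: "y \<in> {0..<k}" and x': "x' \<in> {0..<k}"
        and y': "y' \<in> {0..<k}" and e: "t x \<otimes> ns ! y \<otimes> c = t x' \<otimes> ns ! y' \<otimes> c"
      have e2: "t x \<otimes> ns ! y = t x' \<otimes> ns ! y'"
        using e c tc nsc x y x' y' r_cancel by auto
      have cosy: "\<And>a n. a < k \<Longrightarrow> n < k \<Longrightarrow> N #> (t a \<otimes> ns ! n) = f a"
      proof -
        fix a n assume a: "a < k" and n: "n < k"
        have "N #> (t a \<otimes> ns ! n) = N #> (ns ! n \<otimes> t a)" using tc nsc a n m_comm by simp
        also have "\<dots> = (N #> ns ! n) #> t a" using coset_mult_assoc Nsub tc nsc a n by simp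
        also have "\<dots> = N #> t a" using coset_join2[OF _ sg] nsc n sns lenns nth_mem by metis
        finally show "N #> (t a \<otimes> ns ! n) = f a" using tcos a by simp
      qed
      have "f x = f x'" using cosy[of x y] cosy[of x' y'] e2 x y x' y' by simp
      hence xx: "x = x'" using f x x' unfolding bij_betw_def inj_on_def by blast
      hence "ns ! y = ns ! y'" using e2 tc nsc x y y' l_cancel by auto
      hence "y = y'" using dns y y' lenns nth_eq_iff_index_eq by auto
      thus "x = x' \<and> y = y'" using xx by simp
    qed
  qed
  have imC: "\<And>c. c \<in> carrier G \<Longrightarrow> (\<lambda>(x, y). t x \<otimes> ns ! y \<otimes> c) ` ({0..<k} \<times> {0..<k}) \<subseteq> carrier G"
    using tc nsc by auto
  have rl_bij: "bij_betw rl {0..<k^2} (carrier G)"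
  proof (rule bij_card_aux[OF fin])
    show "inj_on rl {0..<k^2}"
    proof (rule inj_onI)
      fix a b assume a: "a \<in> {0..<k^2}" and b: "b \<in> {0..<k^2}" and e: "rl a = rl b"
      have ak: "a div k < k" "b div k < k" using a b divk2_aux by auto
      have "(\<lambda>(x, y). t x \<otimes> ns ! y \<otimes> \<one>) (a mod k, a div k) = (\<lambda>(x, y). t x \<otimes> ns ! y \<otimes> \<one>) (b mod k, b div k)"
      proof -
        have mk: "a mod k < k" "b mod k < k" using kpos by auto
        have "t (a mod k) \<otimes> ns ! (a div k) = t (b mod k) \<otimes> ns ! (b div k)"
          using e by (simp only: rl_eq)
        thus ?thesis using tc[OF mk(1)] tc[OF mk(2)] nsc[OF ak(1)] nsc[OF ak(2)] by simp
      qed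
      moreover have "(a mod k, a div k) \<in> {0..<k} \<times> {0..<k}" "(b mod k, b div k) \<in> {0..<k} \<times> {0..<k}"
        using ak kpos by auto
      ultimately have "(a mod k, a div k) = (b mod k, b div k)"
        using inj_onD[OF injC[OF one_closed]] by blast
      thus "a = b" by (metis div_mod_decomp prod.inject)
    qed
    show "rl ` {0..<k^2} \<subseteq> carrier G"
    proof
      fix z assume "z \<in> rl ` {0..<k^2}"
      then obtain a where a: "a < k^2" and z: "z = rl a" by auto
      have "a div k < k" "a mod k < k" using divk2_aux[OF a] kpos by auto
      thus "z \<in> carrier G" using z rl_eq tc nsc by simp
    qed
    show "card {0..<k^2} = card (carrier G)" using assms(4) by simp
  qed
  have cl_bij: "bij_betw cl {0..<k^2} (carrier G)"
  proof (rule bij_card_aux[OF fin])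
    show "inj_on cl {0..<k^2}"
    proof (rule inj_onI)
      fix a b assume a: "a \<in> {0..<k^2}" and b: "b \<in> {0..<k^2}" and e: "cl a = cl b"
      have ab: "a < k * k" "b < k * k" using a b by (simp_all add: power2_eq_square)
      have ak: "a div k < k" "b div k < k" using ab divk_aux by auto
      have "(\<lambda>(x, y). t x \<otimes> ns ! y \<otimes> \<one>) (a div k, a mod k) = (\<lambda>(x, y). t x \<otimes> ns ! y \<otimes> \<one>) (b div k, b mod k)"
      proof -
        have mk: "a mod k < k" "b mod k < k" using kpos by auto
        have "t (a div k) \<otimes> ns ! (a mod k) = t (b div k) \<otimes> ns ! (b mod k)"
          using e cl_eq[OF ab(1)] cl_eq[OF ab(2)] by simp
        thus ?thesis using tc[OF ak(1)] tc[OF ak(2)] nsc[OF mk(1)] nsc[OF mk(2)] by simp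
      qed
      moreover have "(a div k, a mod k) \<in> {0..<k} \<times> {0..<k}" "(b div k, b mod k) \<in> {0..<k} \<times> {0..<k}"
        using ak kpos by auto
      ultimately have "(a div k, a mod k) = (b div k, b mod k)"
        using inj_onD[OF injC[OF one_closed]] by blast
      thus "a = b" by (metis div_mod_decomp prod.inject)
    qed
    show "cl ` {0..<k^2} \<subseteq> carrier G"
    proof
      fix z assume "z \<in> cl ` {0..<k^2}"
      then obtain a where a: "a < k * k" and z: "z = cl a" by (auto simp: power2_eq_square)
      have "a div k < k" "a mod k < k" using divk_aux[OF a] kpos by auto
      thus "z \<in> carrier G" using z cl_eq[OF a] tc nsc by simp
    qed
    show "card {0..<k^2} = card (carrier G)" using assms(4) by simp
  qed
  have kdiv: "k ^ 2 div k = k" using kpos by (simp add: power2_eq_square)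
  have be: "\<And>a b x y. a < k \<Longrightarrow> b < k \<Longrightarrow> x < k \<Longrightarrow> y < k \<Longrightarrow>
      block_entry G rl cl k k a b x y = t x \<otimes> ns ! y \<otimes> (ns ! a \<otimes> t b)"
  proof -
    fix a b x y assume a: "a < k" and b: "b < k" and x: "x < k" and y: "y < k"
    have bk: "b * k + y < k * k"
    proof -
      have "b * k + y < b * k + k" using y by simp
      also have "\<dots> = (b + 1) * k" by simp
      also have "\<dots> \<le> k * k" using b by (intro mult_right_mono) auto
      finally show ?thesis .
    qed
    have "block_entry G rl cl k k a b x y = (t x \<otimes> ns ! a) \<otimes> (t b \<otimes> ns ! y)"
      unfolding block_entry_def rl_eq cl_eq[OF bk] using x y by simp
    also have "\<dots> = t x \<otimes> ns ! y \<otimes> (ns ! a \<otimes> t b)"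
      using tc nsc a b x y by (simp add: m_ac)
    finally show "block_entry G rl cl k k a b x y = t x \<otimes> ns ! y \<otimes> (ns ! a \<otimes> t b)" .
  qed
  have cs: "cayley_sudoku G rl cl (k^2) k k"
    unfolding cayley_sudoku_def cayley_table_def
  proof (intro conjI allI impI)
    show "k ^ 2 = card (carrier G)" using assms(4) by simp
    show "bij_betw rl {0..<k^2} (carrier G)" by (rule rl_bij)
    show "bij_betw cl {0..<k^2} (carrier G)" by (rule cl_bij)
    show "0 < k" by (rule kpos)
    show "0 < k" by (rule kpos)
    show "k dvd k^2" by simp
    show "k dvd k^2" by simp
    fix a b assume a: "a < k ^ 2 div k" and b: "b < k ^ 2 div k"
    have a': "a < k" and b': "b < k" using a b kdiv by auto
    have cc: "ns ! a \<otimes> t b \<in> carrier G" using nsc tc a' b' by simp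
    have "bij_betw (\<lambda>(x, y). t x \<otimes> ns ! y \<otimes> (ns ! a \<otimes> t b)) ({0..<k} \<times> {0..<k}) (carrier G)"
      using bij_card_aux[OF fin injC[OF cc] imC[OF cc]] cardG by (simp add: card_cartesian_product)
    thus "bij_betw (\<lambda>(x, y). block_entry G rl cl k k a b x y) ({0..<k} \<times> {0..<k}) (carrier G)"
      by (rule bij_betw_cong[THEN iffD1, rotated]) (auto simp: be a' b')
  qed
  have pm: "pandiagonal_magic G rl cl (k^2) k"
    unfolding pandiagonal_magic_def
  proof (intro conjI allI impI cs)
    fix a b assume a: "a < k ^ 2 div k" and b: "b < k ^ 2 div k"
    have a': "a < k" and b': "b < k" using a b kdiv by auto
    define c where "c = ns ! a \<otimes> t b"
    have cc: "c \<in> carrier G" unfolding c_def using nsc tc a' b' by simp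
    have nsPi: "(\<lambda>y. ns ! y) \<in> {0..<k} \<rightarrow> carrier G" using nsc by auto
    {
      fix x assume x: "x < k"
      have "finprod G (\<lambda>y. block_entry G rl cl k k a b x y) {0..<k} = finprod G (\<lambda>y. t x \<otimes> ns ! y \<otimes> c) {0..<k}"
        using be a' b' x tc nsc unfolding c_def by (intro finprod_cong') auto
      also have "\<dots> = finprod G (\<lambda>y. t x) {0..<k} \<otimes> finprod G (\<lambda>y. ns ! y) {0..<k} \<otimes> c [^] k"
        using prod3[OF cc, where f="\<lambda>y. t x" and g="\<lambda>y. ns ! y" and k=k] tc x nsPi by auto
      also have "\<dots> = \<one>" using PN pow1 cc tc x by (simp add: finprod_const)
      finally show "finprod G (\<lambda>y. block_entry G rl cl k k a b x y) {0..<k} = \<one>" .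
    }
    {
      fix y assume y: "y < k"
      have "finprod G (\<lambda>x. block_entry G rl cl k k a b x y) {0..<k} = finprod G (\<lambda>x. t x \<otimes> ns ! y \<otimes> c) {0..<k}"
        using be a' b' y tc nsc unfolding c_def by (intro finprod_cong') auto
      also have "\<dots> = finprod G t {0..<k} \<otimes> finprod G (\<lambda>x. ns ! y) {0..<k} \<otimes> c [^] k"
        using prod3[OF cc, where f="t" and g="\<lambda>x. ns ! y" and k=k] tPi nsc y by auto
      also have "\<dots> = \<one>" using PT pow1 cc nsc y by (simp add: finprod_const)
      finally show "finprod G (\<lambda>x. block_entry G rl cl k k a b x y) {0..<k} = \<one>" .
    }
    {
      fix j assume j: "j < k"
      let ?s = "\<lambda>l. (l + j) mod k"
      have sub1: "?s ` {0..<k} \<subseteq> {0..<k}" using kpos by auto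
      have "finprod G (\<lambda>l. block_entry G rl cl k k a b l (?s l)) {0..<k} = finprod G (\<lambda>l. t l \<otimes> ns ! ?s l \<otimes> c) {0..<k}"
        using be a' b' kpos tc nsc unfolding c_def by (intro finprod_cong') auto
      also have "\<dots> = finprod G t {0..<k} \<otimes> finprod G (\<lambda>l. ns ! ?s l) {0..<k} \<otimes> c [^] k"
        using prod3[OF cc, where f="t" and g="\<lambda>l. ns ! ?s l" and k=k] tPi nsc kpos by auto
      also have "\<dots> = \<one>" using PT PNs[OF mod_perm1[OF kpos, of j] sub1] pow1 cc kpos by auto
      finally show "finprod G (\<lambda>l. block_entry G rl cl k k a b l (?s l)) {0..<k} = \<one>" .
    }
    {
      fix j assume j: "j < k"
      let ?s = "\<lambda>l. (j + k - l) mod k"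
      have sub2: "?s ` {0..<k} \<subseteq> {0..<k}" using kpos by auto
      have "finprod G (\<lambda>l. block_entry G rl cl k k a b l (?s l)) {0..<k} = finprod G (\<lambda>l. t l \<otimes> ns ! ?s l \<otimes> c) {0..<k}"
        using be a' b' kpos tc nsc unfolding c_def by (intro finprod_cong') auto
      also have "\<dots> = finprod G t {0..<k} \<otimes> finprod G (\<lambda>l. ns ! ?s l) {0..<k} \<otimes> c [^] k"
        using prod3[OF cc, where f="t" and g="\<lambda>l. ns ! ?s l" and k=k] tPi nsc kpos by auto
      also have "\<dots> = \<one>" using PT PNs[OF mod_perm2[OF kpos j] sub2] pow1 cc kpos by auto
      finally show "finprod G (\<lambda>l. block_entry G rl cl k k a b l (?s l)) {0..<k} = \<one>" .
    }
  qed
  show "\<exists>ts. length ts = k \<and> left_coset_reps G N ts \<and>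
                 pandiagonal_magic G (based_row G ns ts) (based_col G ns ts) (k ^ 2) k"
    using lts lcr pm unfolding rl_def cl_def by blast
qed


theorem theorem4p1:
  fixes G :: "('a, 'b) monoid_scheme" and N :: "'a set" and k :: nat
  assumes "comm_group G"
    and "finite (carrier G)"
    and "0 < k"
    and "card (carrier G) = k ^ 2"
    and "grp_exp G dvd k"
    and "subgroup N G"
    and "card N = k"
    and "finprod G (\<lambda>x. x) N = \<one>\<^bsub>G\<^esub>"
    and "finprod (G Mod N) (\<lambda>C. C) (carrier (G Mod N)) = \<one>\<^bsub>G Mod N\<^esub>"
  shows "\<forall>ns. listing_of ns N \<longrightarrow>
           (\<exists>ts. length ts = k \<and> left_coset_reps G N ts \<and>
                 pandiagonal_magic G (based_row G ns ts) (based_col G ns ts) (k ^ 2) k)"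
  using comm_group.core[OF assms(1) _ assms(2-9)] by simp

end
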